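(* Consider the fifth-order WENO reconstruction of the numerical flux $\hat f_{i\pm\frac12}=\sum_{m=0}^{2}\omega_{m,i\pm\frac12}\hat f^m_{i\pm\frac12}$ on a uniform grid $x_i=x_0+i\Delta x$, for a smooth function $f$. Use the WENO-JS weights with $\epsilon=0$, $$\omega_{m}=\frac{\alpha_m}{\sum_{l=0}^2\alpha_l},\qquad \alpha_m=\frac{d_m}{(\beta^{DS}_{m})^2},\qquad (d_0,d_1,d_2)=\Bigl(\tfrac1{10},\tfrac6{10},\tfrac3{10}\Bigr),$$ where $\beta^{DS}_{m,i\pm\frac12}=\beta_{m,i\pm\frac12}(\delta_{m,i}+C)$. Assume that the Jiang–Shu smoothness indicators satisfy $\beta_{m,i\pm\frac12}=D(1+O(\Delta x^2))$ with $D$ a nonzero constant independent of $m$, that the multipliers satisfy $\delta_{1,i}=\Phi(\bar x_i)$, $\delta_{0,i}=\Phi(\bar x_i)+O(\Delta x)$, $\delta_{2,i}=\Phi(\bar x_i)+O(\Delta x)$ for some function $\Phi$ of the stencil $\bar x_i=(x_{i-k},\dots,x_{i+k})$, and that $C$ is chosen so that $P(\bar x_i):=\Phi(\bar x_i)+C>\kappa>0$ for a fixed $\kappa$ (with $P=O(1)$). Then $$\omega^{DS}_{m,i\pm\frac12}=d_m+O(\Delta x),\qquad m=0,1,2.$$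
   Context: Fifth-order WENO: on the stencil $\{x_{i-2},\dots,x_{i+2}\}$, with $f_j=f(u(x_j))$, the candidate fluxes are $\hat f^0_{i+\frac12}=\frac{2f_{i-2}-7f_{i-1}+11f_i}{6}$, $\hat f^1_{i+\frac12}=\frac{-f_{i-1}+5f_i+2f_{i+1}}{6}$, $\hat f^2_{i+\frac12}=\frac{2f_i+5f_{i+1}-f_{i+2}}{6}$ (the $i-\frac12$ versions by shifting all indices by $-1$). The Jiang–Shu smoothness indicators for $\hat f_{i+\frac12}$ are $\beta_0=\frac{13}{12}(f_{i-2}-2f_{i-1}+f_i)^2+\frac14(f_{i-2}-4f_{i-1}+3f_i)^2$, $\beta_1=\frac{13}{12}(f_{i-1}-2f_i+f_{i+1})^2+\frac14(-f_{i-1}+f_{i+1})^2$, $\beta_2=\frac{13}{12}(f_i-2f_{i+1}+f_{i+2})^2+\frac14(3f_i-4f_{i+1}+f_{i+2})^2$; those for $\hat f_{i-\frac12}$ by index shift $-1$. The same multiplier $\delta_{m,i}$ (depending only on the global stencil position $i$) is used for both $\beta_{m,i+\frac12}$ and $\beta_{m,i-\frac12}$; in the paper the $\delta_{m,i}$ are outputs of a convolutional neural network with differentiable activations and receptive field of size $2k+1$, with $\delta_{0,i+1}=\delta_{1,i}=\delta_{2,i-1}$. *)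

theory Defs
  imports "HOL-Analysis.Analysis"
begin

definition grid :: "real \<Rightarrow> real \<Rightarrow> int \<Rightarrow> real" where
  "grid x0 dx j = x0 + of_int j * dx"

definition fval :: "(real \<Rightarrow> real) \<Rightarrow> real \<Rightarrow> real \<Rightarrow> int \<Rightarrow> real" where
  "fval fx x0 dx j = fx (grid x0 dx j)"

text \<open>Jiang--Shu smoothness indicators beta_m for the flux at i+1/2
  (those for i-1/2 are obtained with index i-1).\<close>
definition betaJS :: "(real \<Rightarrow> real) \<Rightarrow> real \<Rightarrow> real \<Rightarrow> int \<Rightarrow> nat \<Rightarrow> real" where
  "betaJS fx x0 dx i m =
     (let f = fval fx x0 dx in
      if m = 0 then 13/12 * (f (i-2) - 2 * f (i-1) + f i)^2 + 1/4 * (f (i-2) - 4 * f (i-1) + 3 * f i)^2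
      else if m = 1 then 13/12 * (f (i-1) - 2 * f i + f (i+1))^2 + 1/4 * (- f (i-1) + f (i+1))^2
      else 13/12 * (f i - 2 * f (i+1) + f (i+2))^2 + 1/4 * (3 * f i - 4 * f (i+1) + f (i+2))^2)"

definition stencil :: "real \<Rightarrow> real \<Rightarrow> nat \<Rightarrow> int \<Rightarrow> real list" where
  "stencil x0 dx k i = map (grid x0 dx) [i - int k .. i + int k]"

definition dw :: "nat \<Rightarrow> real" where
  "dw m = (if m = 0 then 1/10 else if m = 1 then 6/10 else 3/10)"

definition betaDS :: "(nat \<Rightarrow> real) \<Rightarrow> (nat \<Rightarrow> real) \<Rightarrow> real \<Rightarrow> nat \<Rightarrow> real" where
  "betaDS beta delta C m = beta m * (delta m + C)"

definition alphaDS :: "(nat \<Rightarrow> real) \<Rightarrow> (nat \<Rightarrow> real) \<Rightarrow> real \<Rightarrow> nat \<Rightarrow> real" where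
  "alphaDS beta delta C m = dw m / (betaDS beta delta C m)^2"

definition omegaDS :: "(nat \<Rightarrow> real) \<Rightarrow> (nat \<Rightarrow> real) \<Rightarrow> real \<Rightarrow> nat \<Rightarrow> real" where
  "omegaDS beta delta C m = alphaDS beta delta C m / (\<Sum>l\<in>{0..2}. alphaDS beta delta C l)"

end

theory Submission
  imports Defs
begin

lemma lemB: fixes q t :: real assumes "\<bar>q - 1\<bar> \<le> t" "t \<le> 1/2"
  shows "\<bar>1/q^2 - 1\<bar> \<le> 10 * t"
proof -
  have q: "q \<ge> 1/2" "q \<le> 3/2" using assms by auto
  have "1/q^2 - 1 = (1 - q) * (1 + q) / q^2" using q by (simp add: field_simps power2_eq_square)
  hence "\<bar>1/q^2 - 1\<bar> = \<bar>1 - q\<bar> * (1 + q) / q^2" using q by (simp add: abs_mult)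
  also have "\<dots> \<le> \<bar>1 - q\<bar> * (5/2) / (1/4)"
  proof (rule frac_le)
    show "0 \<le> \<bar>1 - q\<bar> * (5 / 2)" by simp
    show "\<bar>1 - q\<bar> * (1 + q) \<le> \<bar>1 - q\<bar> * (5 / 2)" using q by (intro mult_left_mono) auto
    show "0 < (1/4::real)" by simp
    have "(1/2)^2 \<le> q^2" using q by (intro power_mono) auto
    thus "1/4 \<le> q^2" by (simp add: power2_eq_square)
  qed
  also have "\<dots> \<le> 10 * t" using assms by (simp add: abs_minus_commute)
  finally show ?thesis .
qed

lemma lemA: fixes s :: "nat \<Rightarrow> real" assumes "\<And>m. m \<le> 2 \<Longrightarrow> \<bar>s m - 1\<bar> \<le> \<eta>" "\<eta> \<le> 1/2" "m \<le> 2"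
  shows "\<bar>dw m * s m / (\<Sum>l\<in>{0..2}. dw l * s l) - dw m\<bar> \<le> 4 * \<eta>"
proof -
  have sum: "(\<Sum>l\<in>{0..2}. dw l * s l) = dw 0 * s 0 + dw 1 * s 1 + dw 2 * s 2"
    by (simp add: numeral_2_eq_2)
  have d: "dw 0 = 1/10" "dw 1 = 6/10" "dw 2 = 3/10" by (simp_all add: dw_def)
  have s0: "\<bar>s 0 - 1\<bar> \<le> \<eta>" and s1: "\<bar>s 1 - 1\<bar> \<le> \<eta>" and s2: "\<bar>s 2 - 1\<bar> \<le> \<eta>" using assms(1) by auto
  define S where "S = dw 0 * s 0 + dw 1 * s 1 + dw 2 * s 2"
  have S1: "\<bar>S - 1\<bar> \<le> \<eta>" unfolding S_def d using s0 s1 s2 by (simp add: abs_le_iff)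
  have Spos: "S \<ge> 1/2" using S1 assms(2) by linarith
  have sm: "\<bar>s m - 1\<bar> \<le> \<eta>" using assms by auto
  have dm: "0 \<le> dw m" "dw m \<le> 1" by (auto simp: dw_def)
  have "dw m * s m / S - dw m = dw m * (s m - S) / S" using Spos by (simp add: field_simps)
  hence "\<bar>dw m * s m / S - dw m\<bar> = dw m * \<bar>s m - S\<bar> / S" using Spos dm by (simp add: abs_mult)
  also have "\<dots> \<le> 1 * (2 * \<eta>) / (1/2)"
  proof (rule frac_le)
    have "\<bar>s m - S\<bar> \<le> 2 * \<eta>" using sm S1 by (simp add: abs_le_iff; linarith)
    thus "dw m * \<bar>s m - S\<bar> \<le> 1 * (2 * \<eta>)" using dm by (intro mult_mono) auto
  qed (use Spos sm in auto)
  also have "\<dots> = 4 * \<eta>" by simp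
  finally show ?thesis unfolding sum S_def .
qed

lemma lemC: assumes "c \<noteq> 0"
  shows "omegaDS b del C m = dw m * (1 / (b m * (del m + C) / c)^2) /
     (\<Sum>l\<in>{0..2}. dw l * (1 / (b l * (del l + C) / c)^2))"
proof -
  have a: "alphaDS b del C l = dw l * (1 / (b l * (del l + C) / c)^2) / c^2" for l
    using assms by (simp add: alphaDS_def betaDS_def power_divide)
  show ?thesis unfolding omegaDS_def a sum_divide_distrib[symmetric] using assms by simp
qed

lemma lemD: fixes b p D P :: real
  assumes "D \<noteq> 0" "P > \<kappa>" "\<kappa> > 0" "\<bar>b - D\<bar> \<le> M1 * dx^2 * \<bar>D\<bar>" "\<bar>p - P\<bar> \<le> M2 * dx"
    "\<bar>P\<bar> \<le> B" "0 < dx" "dx < 1" "M1 \<ge> 0" "M2 \<ge> 0"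
  shows "\<bar>b * p / (D * P) - 1\<bar> \<le> (M2 + M1 * (B + M2)) / \<kappa> * dx"
proof -
  define e where "e = (b - D) / D"
  have b: "b = D * (1 + e)" using assms(1) unfolding e_def by (simp add: field_simps)
  have e: "\<bar>e\<bar> \<le> M1 * dx^2" using assms(1,4) unfolding e_def by (simp add: abs_divide divide_le_eq)
  have dx2: "dx^2 \<le> dx" using assms(7,8) by (simp add: power2_eq_square)
  have e2: "\<bar>e\<bar> \<le> M1 * dx" using e dx2 assms(9) by (meson mult_left_mono order_trans)
  have Ppos: "P > 0" using assms by linarith
  have "b * p / (D * P) - 1 = ((p - P) + e * p) / P" using assms(1) Ppos unfolding b by (simp add: field_simps)
  hence eq: "\<bar>b * p / (D * P) - 1\<bar> = \<bar>(p - P) + e * p\<bar> / P" using Ppos by (simp add: abs_divide)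
  have pb: "\<bar>p\<bar> \<le> B + M2" using assms(5-10) by (simp add: abs_le_iff) (smt (verit) mult_left_le)
  have "\<bar>e * p\<bar> \<le> M1 * dx * (B + M2)" unfolding abs_mult
    using e2 pb by (intro mult_mono) auto
  hence num: "\<bar>(p - P) + e * p\<bar> \<le> (M2 + M1 * (B + M2)) * dx"
    using assms(5) abs_triangle_ineq[of "p - P" "e*p"] by (simp add: algebra_simps)
  have "\<bar>(p - P) + e * p\<bar> / P \<le> (M2 + M1 * (B + M2)) * dx / \<kappa>"
    apply (rule frac_le) using num assms by auto
  thus ?thesis using eq by simp
qed

theorem mainTheorem2:
  fixes fx :: "real \<Rightarrow> real" and x0 C \<kappa> :: real and k :: nat
    and \<Phi> :: "real list \<Rightarrow> real"
    and \<delta> :: "real \<Rightarrow> int \<Rightarrow> nat \<Rightarrow> real"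
    and D :: "real \<Rightarrow> int \<Rightarrow> real"
  assumes smooth: "\<forall>n x. ((deriv ^^ n) fx) differentiable (at x)"
    and D_nz: "\<forall>dx i. 0 < dx \<longrightarrow> D dx i \<noteq> 0"
    and beta_asym: "\<exists>M h1. 0 < h1 \<and> (\<forall>dx i m. 0 < dx \<and> dx < h1 \<and> m \<le> 2 \<longrightarrow>
            \<bar>betaJS fx x0 dx i m - D dx i\<bar> \<le> M * dx^2 * \<bar>D dx i\<bar>)"
    and delta1: "\<forall>dx i. \<delta> dx i 1 = \<Phi> (stencil x0 dx k i)"
    and delta02: "\<exists>M h1. 0 < h1 \<and> (\<forall>dx i. 0 < dx \<and> dx < h1 \<longrightarrow>
            \<bar>\<delta> dx i 0 - \<Phi> (stencil x0 dx k i)\<bar> \<le> M * dx \<and>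
            \<bar>\<delta> dx i 2 - \<Phi> (stencil x0 dx k i)\<bar> \<le> M * dx)"
    and kappa_pos: "0 < \<kappa>"
    and P_lower: "\<forall>dx i. 0 < dx \<longrightarrow> \<Phi> (stencil x0 dx k i) + C > \<kappa>"
    and P_bounded: "\<exists>B. \<forall>dx i. 0 < dx \<longrightarrow> \<bar>\<Phi> (stencil x0 dx k i) + C\<bar> \<le> B"
  shows "\<exists>K h0. 0 < h0 \<and> (\<forall>dx i m. 0 < dx \<and> dx < h0 \<and> m \<le> 2 \<longrightarrow>
            \<bar>omegaDS (betaJS fx x0 dx i) (\<delta> dx i) C m - dw m\<bar> \<le> K * dx \<and>
            \<bar>omegaDS (betaJS fx x0 dx (i - 1)) (\<delta> dx i) C m - dw m\<bar> \<le> K * dx)"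
proof -
  obtain M1 h1 where h1: "0 < h1" and hb: "\<And>dx i m. 0 < dx \<Longrightarrow> dx < h1 \<Longrightarrow> m \<le> 2 \<Longrightarrow>
            \<bar>betaJS fx x0 dx i m - D dx i\<bar> \<le> M1 * dx^2 * \<bar>D dx i\<bar>" using beta_asym by blast
  obtain M2 h2 where h2: "0 < h2" and hd: "\<And>dx i. 0 < dx \<Longrightarrow> dx < h2 \<Longrightarrow>
            \<bar>\<delta> dx i 0 - \<Phi> (stencil x0 dx k i)\<bar> \<le> M2 * dx \<and>
            \<bar>\<delta> dx i 2 - \<Phi> (stencil x0 dx k i)\<bar> \<le> M2 * dx" using delta02 by blast
  obtain B where hB: "\<And>dx i. 0 < dx \<Longrightarrow> \<bar>\<Phi> (stencil x0 dx k i) + C\<bar> \<le> B" using P_bounded by blast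
  define M1' where "M1' = \<bar>M1\<bar>"
  define M2' where "M2' = \<bar>M2\<bar>"
  define T where "T = (M2' + M1' * (\<bar>B\<bar> + M2')) / \<kappa>"
  have T0: "T \<ge> 0" unfolding T_def M1'_def M2'_def using kappa_pos by simp
  define h0 where "h0 = min (min 1 (min h1 h2)) (1 / (20 * T + 1))"
  have h0: "0 < h0" unfolding h0_def using h1 h2 T0 by simp
  have main: "\<bar>omegaDS (betaJS fx x0 dx j) (\<delta> dx i) C m - dw m\<bar> \<le> (40 * T) * dx"
    if dx: "0 < dx" "dx < h0" and m: "m \<le> 2" for dx i j m
  proof -
    define P where "P = \<Phi> (stencil x0 dx k i) + C"
    define c where "c = D dx j * P"
    have Pk: "P > \<kappa>" unfolding P_def using P_lower dx by auto
    have Dnz: "D dx j \<noteq> 0" using D_nz dx by auto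
    have c0: "c \<noteq> 0" unfolding c_def using Dnz Pk kappa_pos by simp
    have dx1: "dx < 1" "dx < h1" "dx < h2" using dx unfolding h0_def by auto
    have dxT: "dx * (20 * T + 1) < 1" using dx unfolding h0_def using T0
      by (simp add: less_divide_eq mult.commute)
    have TdxS: "T * dx \<le> 1/2" "10 * (T * dx) \<le> 1/2" using dxT T0 dx by (simp_all add: algebra_simps) 
    define q where "q l = betaJS fx x0 dx j l * (\<delta> dx i l + C) / c" for l
    have qb: "\<bar>q l - 1\<bar> \<le> T * dx" if l: "l \<le> 2" for l
    proof -
      have pp: "\<bar>(\<delta> dx i l + C) - P\<bar> \<le> M2' * dx"
      proof -
        consider "l = 0" | "l = 1" | "l = 2" using l by linarith
        thus ?thesis
        proof cases
          case 1 thus ?thesis using hd[OF dx(1) dx1(3), of i] unfolding P_def M2'_def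
            by (smt (verit) dx(1) mult_right_mono abs_ge_self)
        next
          case 2 thus ?thesis using delta1 dx unfolding P_def M2'_def by simp
        next
          case 3 thus ?thesis using hd[OF dx(1) dx1(3), of i] unfolding P_def M2'_def
            by (smt (verit) dx(1) mult_right_mono abs_ge_self)
        qed
      qed
      have bb: "\<bar>betaJS fx x0 dx j l - D dx j\<bar> \<le> M1' * dx^2 * \<bar>D dx j\<bar>"
        using hb[OF dx(1) dx1(2) l, of j] unfolding M1'_def
        by (smt (verit) abs_ge_self mult_right_mono zero_le_power2 abs_ge_zero mult_nonneg_nonneg)
      have "\<bar>P\<bar> \<le> \<bar>B\<bar>" using hB[OF dx(1), of i] unfolding P_def by simp
      from lemD[OF Dnz Pk kappa_pos bb pp this dx(1) dx1(1)]
      show ?thesis unfolding q_def c_def T_def M1'_def M2'_def by simp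
    qed
    have sb: "\<bar>1 / q l ^ 2 - 1\<bar> \<le> 10 * (T * dx)" if "l \<le> 2" for l
      using lemB[OF qb[OF that] TdxS(1)] .
    have "\<bar>dw m * (1 / q m ^ 2) / (\<Sum>l\<in>{0..2}. dw l * (1 / q l ^ 2)) - dw m\<bar> \<le> 4 * (10 * (T * dx))"
      by (rule lemA[OF sb TdxS(2) m])
    thus ?thesis using lemC[OF c0, of "betaJS fx x0 dx j" "\<delta> dx i" C m] unfolding q_def by simp
  qed
  show ?thesis
    apply (rule exI[of _ "40 * T"], rule exI[of _ h0])
    using h0 main by blast
qed

end
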